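(* Let $A$ be a primitive axial algebra of Jordan type $\eta$ and let $a,b$ be distinct $\eta$-axes with $N=N_{a,b}$ $3$-dimensional. Let $V=N_{b,\,b^{\tau(a)}}$. Then either $V=N$, or $\eta=\tfrac12$, $N$ has an identity element $\mathbf 1$, and exactly one of the following holds: (i) $ab=-\tfrac12\mathbf 1+\tfrac12a+\tfrac12b$, $b\,b^{\tau(a)}=\tfrac12b+\tfrac12b^{\tau(a)}$, $\dim V=2$, and $\mathrm{Span}\{b,b^{\tau(a)}\}\cap\mathrm{Span}\{\mathbf 1,a\}=\mathbb F(\mathbf 1-a)$; (ii) $ab=-\tfrac14\mathbf 1+\tfrac12a+\tfrac12b$, $b\,b^{\tau(a)}=0$, $\dim V=2$, and $\mathrm{Span}\{b,b^{\tau(a)}\}\cap\mathrm{Span}\{\mathbf 1,a\}=\mathbb F\mathbf 1$.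
   Context: Throughout, $\mathbb F$ is a field of characteristic $\neq 2$ and $\eta\in\mathbb F\setminus\{0,1\}$. Let $A$ be a commutative, not necessarily associative $\mathbb F$-algebra. For $a\in A$ and $\lambda\in\mathbb F$ put $A_\lambda(a)=\{x\in A: xa=\lambda x\}$. An $\eta$-axis of $A$ is an element $a$ with $a^2=a$ such that $A=A_1(a)\oplus A_0(a)\oplus A_\eta(a)$, $A_1(a)=\mathbb F a$, and, writing $A_+(a)=A_1(a)\oplus A_0(a)$ and $A_-(a)=A_\eta(a)$, one has $A_+(a)A_+(a)\subseteq A_+(a)$, $A_+(a)A_-(a)\subseteq A_-(a)$, $A_-(a)A_-(a)\subseteq A_+(a)$ and $A_0(a)A_0(a)\subseteq A_0(a)$. $A$ is a primitive axial algebra of Jordan type $\eta$ if it is generated by $\eta$-axes. The Miyamoto involution $\tau(a)$ acts as $1$ on $A_+(a)$ and $-1$ on $A_-(a)$. $N_{x,y}$ is the subalgebra generated by $x,y$; an identity element of a subalgebra $N$ is $\mathbf 1\in N$ with $\mathbf 1n=n$ for all $n\in N$. *)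

theory Defs
  imports Complex_Main
begin

text \<open>An algebra over a field 'f is modelled by a vector space structure
  given by the scalar multiplication sc on the additive group 'v together with
  a multiplication mu, which is assumed (in the theorem) to be bilinear.\<close>

definition eigsp :: "('f::field \<Rightarrow> 'v::ab_group_add \<Rightarrow> 'v) \<Rightarrow> ('v \<Rightarrow> 'v \<Rightarrow> 'v) \<Rightarrow> 'v \<Rightarrow> 'f \<Rightarrow> 'v set" where
  "eigsp sc mu a l = {x. mu x a = sc l x}"

definition setsum :: "'v::ab_group_add set \<Rightarrow> 'v set \<Rightarrow> 'v set" where
  "setsum U W = {u + w | u w. u \<in> U \<and> w \<in> W}"

definition setprod :: "('v \<Rightarrow> 'v \<Rightarrow> 'v) \<Rightarrow> 'v set \<Rightarrow> 'v set \<Rightarrow> 'v set" where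
  "setprod mu U W = {mu u w | u w. u \<in> U \<and> w \<in> W}"

definition Aplus where "Aplus sc mu a = setsum (eigsp sc mu a 1) (eigsp sc mu a 0)"
definition Aminus where "Aminus sc mu eta a = eigsp sc mu a eta"

definition is_axis :: "('f::field \<Rightarrow> 'v::ab_group_add \<Rightarrow> 'v) \<Rightarrow> ('v \<Rightarrow> 'v \<Rightarrow> 'v) \<Rightarrow> 'f \<Rightarrow> 'v \<Rightarrow> bool" where
  "is_axis sc mu eta a \<longleftrightarrow>
     mu a a = a
   \<and> (\<forall>x. \<exists>!(x1, x0, xe). x1 \<in> eigsp sc mu a 1 \<and> x0 \<in> eigsp sc mu a 0 \<and> xe \<in> eigsp sc mu a eta
                         \<and> x = x1 + x0 + xe)
   \<and> eigsp sc mu a 1 = range (\<lambda>t. sc t a)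
   \<and> setprod mu (Aplus sc mu a) (Aplus sc mu a) \<subseteq> Aplus sc mu a
   \<and> setprod mu (Aplus sc mu a) (Aminus sc mu eta a) \<subseteq> Aminus sc mu eta a
   \<and> setprod mu (Aminus sc mu eta a) (Aminus sc mu eta a) \<subseteq> Aplus sc mu a
   \<and> setprod mu (eigsp sc mu a 0) (eigsp sc mu a 0) \<subseteq> eigsp sc mu a 0"

definition gen_subalg :: "('f::field \<Rightarrow> 'v::ab_group_add \<Rightarrow> 'v) \<Rightarrow> ('v \<Rightarrow> 'v \<Rightarrow> 'v) \<Rightarrow> 'v set \<Rightarrow> 'v set" where
  "gen_subalg sc mu S = \<Inter>{W. S \<subseteq> W \<and> module.subspace sc W \<and> (\<forall>x\<in>W. \<forall>y\<in>W. mu x y \<in> W)}"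

definition primitive_axial_jordan :: "('f::field \<Rightarrow> 'v::ab_group_add \<Rightarrow> 'v) \<Rightarrow> ('v \<Rightarrow> 'v \<Rightarrow> 'v) \<Rightarrow> 'f \<Rightarrow> bool" where
  "primitive_axial_jordan sc mu eta \<longleftrightarrow>
     (\<exists>X. (\<forall>x\<in>X. is_axis sc mu eta x) \<and> gen_subalg sc mu X = UNIV)"

definition miyamoto :: "('f::field \<Rightarrow> 'v::ab_group_add \<Rightarrow> 'v) \<Rightarrow> ('v \<Rightarrow> 'v \<Rightarrow> 'v) \<Rightarrow> 'f \<Rightarrow> 'v \<Rightarrow> 'v \<Rightarrow> 'v" where
  "miyamoto sc mu eta a x =
     (THE y. \<exists>u w. u \<in> Aplus sc mu a \<and> w \<in> Aminus sc mu eta a \<and> x = u + w \<and> y = u - w)"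

definition is_identity_of :: "('v \<Rightarrow> 'v \<Rightarrow> 'v) \<Rightarrow> 'v set \<Rightarrow> 'v \<Rightarrow> bool" where
  "is_identity_of mu N e \<longleftrightarrow> e \<in> N \<and> (\<forall>n\<in>N. mu e n = n)"

end

theory Submission
  imports Defs
begin


locale axalg = vector_space sc
  for sc :: "'f::field \<Rightarrow> 'v::ab_group_add \<Rightarrow> 'v" +
  fixes mu :: "'v \<Rightarrow> 'v \<Rightarrow> 'v" and eta :: 'f
  assumes madd: "mu x (y + z) = mu x y + mu x z"
    and msc: "mu x (sc c y) = sc c (mu x y)"
    and comm: "mu x y = mu y x"
    and two: "(2::'f) \<noteq> 0" and eta0: "eta \<noteq> 0" and eta1: "eta \<noteq> 1"
begin

lemma madd2: "mu (x + y) z = mu x z + mu y z" using madd comm by metis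
lemma msc2: "mu (sc c x) y = sc c (mu x y)" using msc comm by metis
lemma mzero[simp]: "mu x 0 = 0" using msc[of x 0 0] by simp
lemma mzero2[simp]: "mu 0 x = 0" using comm mzero by metis
lemma mdiff: "mu x (y - z) = mu x y - mu x z"
  using madd[of x "y - z" z] by (simp add: eq_diff_eq)
lemma mdiff2: "mu (y - z) x = mu y x - mu z x" using mdiff comm by metis

definition lc :: "'v \<Rightarrow> 'v \<Rightarrow> 'v \<Rightarrow> 'f \<Rightarrow> 'f \<Rightarrow> 'f \<Rightarrow> 'v" where
  "lc u v w x y z = sc x u + sc y v + sc z w"

lemma lc_add: "lc u v w x y z + lc u v w x' y' z' = lc u v w (x+x') (y+y') (z+z')"
  by (simp add: lc_def algebra_simps)
lemma lc_diff: "lc u v w x y z - lc u v w x' y' z' = lc u v w (x-x') (y-y') (z-z')"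
  by (simp add: lc_def algebra_simps)
lemma lc_sc: "sc c (lc u v w x y z) = lc u v w (c*x) (c*y) (c*z)"
  by (simp add: lc_def algebra_simps)
lemma lc_0: "lc u v w 0 0 0 = 0" by (simp add: lc_def)
lemma lc_e1: "u = lc u v w 1 0 0" by (simp add: lc_def)
lemma lc_e2: "v = lc u v w 0 1 0" by (simp add: lc_def)
lemma lc_e3: "w = lc u v w 0 0 1" by (simp add: lc_def)

lemma mu_lc: "mu m (lc u v w x y z) = sc x (mu m u) + sc y (mu m v) + sc z (mu m w)"
  by (simp add: lc_def madd msc)

lemma mu_a_lc:
  assumes "mu a a = a" "mu a v = 0" "mu a w = sc eta w"
  shows "mu a (lc a v w x y z) = lc a v w x 0 (eta*z)"
  unfolding mu_lc by (simp add: assms lc_def)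

lemma lc_zero:
  assumes E: "mu a a = a" "mu a v = 0" "mu a w = sc eta w"
    and nz: "a \<noteq> 0" "v \<noteq> 0" "w \<noteq> 0" and h: "lc a v w x y z = 0"
  shows "x = 0 \<and> y = 0 \<and> z = 0"
proof -
  have 1: "lc a v w x 0 (eta*z) = 0" using mu_a_lc[OF E, of x y z] h by simp
  have 2: "lc a v w x 0 (eta*(eta*z)) = 0" using mu_a_lc[OF E, of x 0 "eta*z"] 1 by simp
  have "sc eta (lc a v w x 0 (eta*z)) - lc a v w x 0 (eta*(eta*z)) = 0" using 1 2 by simp
  hence "lc a v w (eta*x - x) 0 0 = 0" by (simp add: lc_sc lc_diff)
  hence "sc (eta*x - x) a = 0" by (simp add: lc_def)
  hence "(eta - 1) * x = 0" using nz by (simp add: algebra_simps)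
  hence x0: "x = 0" using eta1 by simp
  hence "sc (eta*z) w = 0" using 1 by (simp add: lc_def)
  hence z0: "z = 0" using eta0 nz by simp
  hence "sc y v = 0" using h x0 by (simp add: lc_def)
  thus ?thesis using x0 z0 nz by simp
qed

lemma lc_eq:
  assumes E: "mu a a = a" "mu a v = 0" "mu a w = sc eta w"
    and nz: "a \<noteq> 0" "v \<noteq> 0" "w \<noteq> 0" and h: "lc a v w x y z = lc a v w x' y' z'"
  shows "x = x' \<and> y = y' \<and> z = z'"
  using lc_zero[OF E nz, of "x-x'" "y-y'" "z-z'"] h lc_diff[of a v w x y z x' y' z'] by simp

lemma lc_mult:
  assumes E: "mu a a = a" "mu a v = 0" "mu a w = sc eta w"
    and T: "mu v v = sc P v" "mu v w = sc C w" "mu w w = sc A a + sc B v"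
  shows "mu (lc a v w x y z) (lc a v w x' y' z') =
     lc a v w (x*x' + A*z*z') (P*y*y' + B*z*z') (eta*(x*z'+z*x') + C*(y*z'+z*y'))"
proof -
  have va: "mu v a = 0" "mu w a = sc eta w" "mu w v = sc C w" using E T comm by metis+
  have "mu (lc a v w x y z) (lc a v w x' y' z') = mu (lc a v w x' y' z') (lc a v w x y z)"
    by (rule comm)
  also have "\<dots> = sc x (mu (lc a v w x' y' z') a) + sc y (mu (lc a v w x' y' z') v) + sc z (mu (lc a v w x' y' z') w)"
    by (rule mu_lc)
  also have "mu (lc a v w x' y' z') a = lc a v w x' 0 (eta*z')"
    using comm mu_a_lc[OF E] by metis
  also have "mu (lc a v w x' y' z') v = lc a v w 0 (P*y') (C*z')"
    by (subst comm, unfold mu_lc, simp add: va T lc_def mult.commute)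
  also have "mu (lc a v w x' y' z') w = lc a v w (A*z') (B*z') (eta*x' + C*y')"
    by (subst comm, unfold mu_lc, simp add: va T E lc_def algebra_simps)
  finally show ?thesis by (simp add: lc_sc lc_add algebra_simps)
qed

lemma span_closed:
  assumes G: "\<forall>g\<in>G. \<forall>h\<in>G. mu g h \<in> span G" and x: "x \<in> span G" and y: "y \<in> span G"
  shows "mu x y \<in> span G"
proof -
  have 1: "mu g y \<in> span G" if g: "g \<in> G" and y: "y \<in> span G" for g y
  proof (rule span_induct[of y G "\<lambda>y. mu g y \<in> span G"])
    show "y \<in> span G" by fact
    show "subspace {y. mu g y \<in> span G}" unfolding subspace_def
      by (auto simp: span_zero madd msc span_add span_scale)
    show "\<And>h. h \<in> G \<Longrightarrow> mu g h \<in> span G" using g G by auto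
  qed
  show ?thesis
  proof (rule span_induct[of x G "\<lambda>x. mu x y \<in> span G"])
    show "x \<in> span G" by fact
    show "subspace {x. mu x y \<in> span G}" unfolding subspace_def
      by (auto simp: span_zero madd2 msc2 span_add span_scale)
    show "\<And>h. h \<in> G \<Longrightarrow> mu h y \<in> span G" using 1 y by simp
  qed
qed

definition LS where "LS u v w = {lc u v w x y z | x y z. True}"

lemma LS_I[intro]: "lc u v w x y z \<in> LS u v w" by (auto simp: LS_def)

lemma span_lc: "span {u, v, w} = LS u v w"
proof (rule span_subspace)
  have "u \<in> LS u v w" "v \<in> LS u v w" "w \<in> LS u v w"
    using LS_I[of u v w 1 0 0] LS_I[of u v w 0 1 0] LS_I[of u v w 0 0 1] lc_e1 lc_e2 lc_e3 by metis+
  thus "{u, v, w} \<subseteq> LS u v w" by blast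
  have "u \<in> span {u, v, w}" "v \<in> span {u, v, w}" "w \<in> span {u, v, w}" by (auto intro: span_base)
  thus "LS u v w \<subseteq> span {u, v, w}"
    by (auto simp: LS_def lc_def intro!: span_add span_scale)
  show "subspace (LS u v w)" unfolding subspace_def
  proof (intro conjI ballI allI)
    show "0 \<in> LS u v w" using lc_0 by (metis LS_I)
    fix p q assume "p \<in> LS u v w" "q \<in> LS u v w"
    thus "p + q \<in> LS u v w" using lc_add unfolding LS_def by blast
  next
    fix c p assume "p \<in> LS u v w"
    thus "sc c p \<in> LS u v w" using lc_sc unfolding LS_def by blast
  qed
qed

lemma gen_lower:
  assumes "S \<subseteq> X" "subspace X" "\<forall>x\<in>X. \<forall>y\<in>X. mu x y \<in> X"
  shows "gen_subalg sc mu S \<subseteq> X"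
  unfolding gen_subalg_def using assms by blast

lemma gen_greatest:
  assumes "\<And>X. S \<subseteq> X \<Longrightarrow> subspace X \<Longrightarrow> \<forall>x\<in>X. \<forall>y\<in>X. mu x y \<in> X \<Longrightarrow> Y \<subseteq> X"
  shows "Y \<subseteq> gen_subalg sc mu S"
  unfolding gen_subalg_def using assms by blast

lemma eig_iff: "x \<in> eigsp sc mu a l \<longleftrightarrow> mu a x = sc l x"
  by (simp add: eigsp_def comm)

lemma axis_idem: "is_axis sc mu eta a \<Longrightarrow> mu a a = a"
  by (simp add: is_axis_def)

lemma axis_ex1:
  assumes "is_axis sc mu eta a"
  shows "\<exists>!p. case p of (x1, x0, xe) \<Rightarrow> x1 \<in> eigsp sc mu a 1 \<and> x0 \<in> eigsp sc mu a 0 \<and> xe \<in> eigsp sc mu a eta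
                         \<and> x = x1 + x0 + xe"
  using assms unfolding is_axis_def by blast

lemma axis_one: "is_axis sc mu eta a \<Longrightarrow> sc p a \<in> eigsp sc mu a 1"
  unfolding is_axis_def by auto

lemma axis_one': "is_axis sc mu eta a \<Longrightarrow> x1 \<in> eigsp sc mu a 1 \<Longrightarrow> \<exists>t. x1 = sc t a"
  unfolding is_axis_def by auto

lemma axis_dec:
  assumes ax: "is_axis sc mu eta a"
  obtains p x0 xe where "x = sc p a + x0 + xe" "x0 \<in> eigsp sc mu a 0" "xe \<in> eigsp sc mu a eta"
proof -
  obtain q where "case q of (x1, x0, xe) \<Rightarrow> x1 \<in> eigsp sc mu a 1 \<and> x0 \<in> eigsp sc mu a 0 \<and> xe \<in> eigsp sc mu a eta
                         \<and> x = x1 + x0 + xe" using ex1_implies_ex[OF axis_ex1[OF ax, of x]] by blast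
  then obtain x1 x0 xe where h: "x1 \<in> eigsp sc mu a 1" "x0 \<in> eigsp sc mu a 0" "xe \<in> eigsp sc mu a eta"
    "x = x1 + x0 + xe" by (cases q) auto
  then obtain t where "x1 = sc t a" using axis_one'[OF ax] by blast
  with h that show ?thesis by blast
qed

lemma zero_eig: "0 \<in> eigsp sc mu a l" by (simp add: eig_iff)

lemma fus00:
  assumes "is_axis sc mu eta a" "x \<in> eigsp sc mu a 0" "y \<in> eigsp sc mu a 0"
  shows "mu x y \<in> eigsp sc mu a 0"
  using assms unfolding is_axis_def setprod_def by blast

lemma fus0e:
  assumes ax: "is_axis sc mu eta a" and x: "x \<in> eigsp sc mu a 0" and y: "y \<in> eigsp sc mu a eta"
  shows "mu x y \<in> eigsp sc mu a eta"
proof -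
  have "x \<in> Aplus sc mu a" unfolding Aplus_def setsum_def using x zero_eig[of a 1] by force
  moreover have "y \<in> Aminus sc mu eta a" using y by (simp add: Aminus_def)
  ultimately have "mu x y \<in> setprod mu (Aplus sc mu a) (Aminus sc mu eta a)"
    unfolding setprod_def by blast
  thus ?thesis using ax by (auto simp: is_axis_def Aminus_def)
qed

lemma fusee:
  assumes ax: "is_axis sc mu eta a" and x: "x \<in> eigsp sc mu a eta" and y: "y \<in> eigsp sc mu a eta"
  obtains t where "mu a (mu x y) = sc t a"
proof -
  have "mu x y \<in> setprod mu (Aminus sc mu eta a) (Aminus sc mu eta a)"
    unfolding setprod_def Aminus_def using x y by blast
  hence "mu x y \<in> Aplus sc mu a" using ax by (auto simp: is_axis_def)
  then obtain x1 x0 where "x1 \<in> eigsp sc mu a 1" "x0 \<in> eigsp sc mu a 0" "mu x y = x1 + x0"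
    unfolding Aplus_def setsum_def by blast
  moreover obtain t where "x1 = sc t a" using axis_one'[OF ax] calculation(1) by blast
  moreover have "mu a x1 = x1" "mu a x0 = 0" using calculation by (auto simp: eig_iff)
  ultimately have "mu a (mu x y) = sc t a" by (simp add: madd)
  thus ?thesis using that by blast
qed

lemma miy:
  assumes ax: "is_axis sc mu eta a" and d: "x = sc p a + x0 + xe" "x0 \<in> eigsp sc mu a 0" "xe \<in> eigsp sc mu a eta"
  shows "miyamoto sc mu eta a x = sc p a + x0 - xe"
  unfolding miyamoto_def
proof (rule the_equality)
  have "sc p a \<in> eigsp sc mu a 1" using axis_one[OF ax] .
  hence 1: "sc p a + x0 \<in> Aplus sc mu a" unfolding Aplus_def setsum_def using d by blast
  have 2: "xe \<in> Aminus sc mu eta a" using d by (simp add: Aminus_def)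
  have 3: "x = (sc p a + x0) + xe" using d by simp
  show "\<exists>u w. u \<in> Aplus sc mu a \<and> w \<in> Aminus sc mu eta a \<and> x = u + w \<and> sc p a + x0 - xe = u - w"
    using 1 2 3 by blast
next
  fix y assume "\<exists>u w. u \<in> Aplus sc mu a \<and> w \<in> Aminus sc mu eta a \<and> x = u + w \<and> y = u - w"
  then obtain x1' x0' w where h: "x1' \<in> eigsp sc mu a 1" "x0' \<in> eigsp sc mu a 0" "w \<in> eigsp sc mu a eta"
    "x = x1' + x0' + w" "y = x1' + x0' - w"
    unfolding Aplus_def Aminus_def setsum_def by auto
  obtain q where q: "\<And>r. (case r of (x1, x0, xe) \<Rightarrow> x1 \<in> eigsp sc mu a 1 \<and> x0 \<in> eigsp sc mu a 0 \<and> xe \<in> eigsp sc mu a eta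
                         \<and> x = x1 + x0 + xe) \<Longrightarrow> r = q"
    using axis_ex1[OF ax, of x] by (metis (no_types, lifting) ex1E)
  have "sc p a \<in> eigsp sc mu a 1" using axis_one[OF ax] .
  hence "(sc p a, x0, xe) = q" using d by (intro q) simp
  moreover have "(x1', x0', w) = q" using h by (intro q) simp
  ultimately have "(x1', x0', w) = (sc p a, x0, xe)" by simp
  thus "y = sc p a + x0 - xe" using h by simp
qed

lemma lc_cong: "x = x' \<Longrightarrow> y = y' \<Longrightarrow> z = z' \<Longrightarrow> lc u v w x y z = lc u v w x' y' z'" by simp

lemma LS_span: "LS u v w = span {u, v, w}" using span_lc by simp

lemma LS_sub: "subspace (LS u v w)" unfolding LS_span by simp

lemma LS_dim0:
  assumes "0 \<in> {u, v, w}" shows "dim (LS u v w) \<le> 2"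
proof -
  obtain p q where pq: "{u, v, w} - {0} \<subseteq> {p, q}" using assms by auto
  have "LS u v w \<subseteq> span {p, q}"
    unfolding LS_span span_delete_0[of "{u,v,w}", symmetric] using span_mono[OF pq] .
  hence "dim (LS u v w) \<le> card {p, q}" by (rule dim_le_card) simp
  also have "card {p, q} \<le> 2" by (simp add: card_insert_if)
  finally show ?thesis .
qed

end


context axalg begin

lemma core:
  assumes axa: "is_axis sc mu eta a" and axb: "is_axis sc mu eta b"
    and dimN: "dim (gen_subalg sc mu {a,b}) = 3"
    and bd: "b = sc ph a + b0 + b1" and b0: "b0 \<in> eigsp sc mu a 0" and b1: "b1 \<in> eigsp sc mu a eta"
    and ad: "a = sc ps b + a0 + a1" and a0: "a0 \<in> eigsp sc mu b 0" and a1: "a1 \<in> eigsp sc mu b eta"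
  shows "gen_subalg sc mu {a,b} = LS a b0 b1" and "a \<noteq> 0" "b0 \<noteq> 0" "b1 \<noteq> 0"
    "mu b0 b0 = sc (1/2 + eta - ph) b0" "mu b0 b1 = sc (1/2 - ph*eta) b1"
    "mu b1 b1 = sc (ph - ph*ph) a + sc (1/2 - eta + ph) b0"
    "ps*(1-eta) = eta*(1/2 - eta + ph)" "ph*(2*eta-1)*(ph - eta/2) = 0"
proof -
  have E: "mu a a = a" "mu a b0 = 0" "mu a b1 = sc eta b1" using axis_idem[OF axa] b0 b1 by (auto simp: eig_iff)
  have Eb: "mu b b = b" "mu b a0 = 0" "mu b a1 = sc eta a1" using axis_idem[OF axb] a0 a1 by (auto simp: eig_iff)
  define L where "L = lc a b0 b1"
  have hb: "b = L ph 1 1" using bd by (simp add: L_def lc_def)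
  have ha: "a = L 1 0 0" "b0 = L 0 1 0" "b1 = L 0 0 1" unfolding L_def by (rule lc_e1 lc_e2 lc_e3)+
  have hab: "mu a b = L ph 0 eta" using mu_a_lc[OF E, of ph 1 1] hb by (simp add: L_def)
  have X0: "mu b (sc ps b + a0 + a1) = sc ps b + sc eta a1" by (simp add: madd msc Eb)
  have hab2: "mu a b = sc ps b + sc eta a1" using ad X0 comm by metis
  define ps' where "ps' = ps*(1-eta)"
  have hbab: "mu b (mu a b) = sc eta (mu a b) + sc ps' b"
    unfolding hab2 ps'_def by (simp add: madd msc Eb algebra_simps)
  have hba: "mu b a = L ph 0 eta" using hab comm by metis
  have "mu b (mu a b) = sc ph (mu b a) + sc eta (mu b b1)"
    unfolding hab L_def mu_lc by simp
  hence "sc eta (mu b b1) = sc eta (L ph 0 eta) + sc ps' (L ph 1 1) - sc ph (L ph 0 eta)"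
    using hbab hab hba hb by (simp add: algebra_simps)
  also have "\<dots> = L (eta*ph + ps'*ph - ph*ph) ps' (eta*eta + ps' - ph*eta)"
    unfolding L_def by (simp add: lc_sc lc_add lc_diff)
  finally have s1: "sc eta (mu b b1) = L (eta*ph + ps'*ph - ph*ph) ps' (eta*eta + ps' - ph*eta)" .
  define X where "X = (eta*ph + ps'*ph - ph*ph)/eta"
  define Y where "Y = ps'/eta"
  define Zb where "Zb = (eta*eta + ps' - ph*eta)/eta"
  define Z where "Z = Zb - ph*eta"
  have hbb1: "mu b b1 = L X Y Zb"
  proof -
    have "mu b b1 = sc (1/eta) (sc eta (mu b b1))" using eta0 by simp
    also have "\<dots> = L X Y Zb" unfolding s1 L_def lc_sc X_def Y_def Zb_def by simp
    finally show ?thesis .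
  qed
  have "mu b b1 = mu b1 (L ph 1 1)" using hb comm by metis
  also have "\<dots> = sc (ph*eta) b1 + mu b0 b1 + mu b1 b1"
    unfolding L_def mu_lc using E comm by (metis scale_one scale_scale mult.commute)
  finally have "mu b0 b1 + mu b1 b1 = L X Y Zb - L 0 0 (ph*eta)"
    using hbb1 by (simp add: L_def lc_def algebra_simps)
  hence S1: "mu b0 b1 + mu b1 b1 = L X Y Z" unfolding L_def lc_diff Z_def by simp
  have F1: "mu a (mu b0 b1) = sc eta (mu b0 b1)" using fus0e[OF axa b0 b1] by (simp add: eig_iff)
  obtain t where F2: "mu a (mu b1 b1) = sc t a" using fusee[OF axa b1 b1] by blast
  have "mu a (mu b0 b1 + mu b1 b1) = L X 0 (eta*Z)" unfolding S1 L_def by (rule mu_a_lc[OF E])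
  hence "sc eta (mu b0 b1) = L X 0 (eta*Z) - L t 0 0"
    using F1 F2 by (simp add: madd L_def lc_def algebra_simps)
  hence S2: "sc eta (mu b0 b1) = L (X - t) 0 (eta*Z)" unfolding L_def lc_diff by simp
  have S2': "mu b0 b1 = L ((X-t)/eta) 0 Z"
  proof -
    have "mu b0 b1 = sc (1/eta) (sc eta (mu b0 b1))" using eta0 by simp
    also have "\<dots> = L ((X-t)/eta) 0 Z" unfolding S2 L_def lc_sc using eta0 by simp
    finally show ?thesis .
  qed
  have S3: "mu b1 b1 = L (X - (X-t)/eta) Y 0"
  proof -
    have "mu b1 b1 = L X Y Z - mu b0 b1" using S1 by (simp add: algebra_simps)
    thus ?thesis unfolding S2' L_def lc_diff by simp
  qed
  have hbb0: "mu b b0 = mu b0 b0 + mu b0 b1"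
  proof -
    have "mu b b0 = mu b0 (L ph 1 1)" using hb comm by metis
    also have "\<dots> = mu b0 b0 + mu b0 b1" unfolding L_def mu_lc using E comm by (metis scale_one scale_zero_right add_0)
    finally show ?thesis .
  qed
  have "b = mu b (L ph 1 1)" using Eb hb by metis
  also have "\<dots> = sc ph (mu b a) + mu b b0 + mu b b1" unfolding L_def mu_lc by simp
  finally have "mu b0 b0 = L ph 1 1 - sc ph (L ph 0 eta) - L ((X-t)/eta) 0 Z - L X Y Zb"
    using hb hba hbb0 S2' hbb1 by (simp add: algebra_simps)
  hence S4: "mu b0 b0 = L (ph - ph*ph - (X-t)/eta - X) (1 - Y) (1 - ph*eta - Z - Zb)"
    unfolding L_def lc_diff lc_sc by (simp add: algebra_simps)
  have G: "\<forall>g\<in>{a,b0,b1}. \<forall>h\<in>{a,b0,b1}. mu g h \<in> span {a,b0,b1}"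
  proof -
    have "lc a b0 b1 0 0 eta = sc eta b1" by (simp add: lc_def)
    hence "mu a a \<in> LS a b0 b1" "mu a b0 \<in> LS a b0 b1" "mu a b1 \<in> LS a b0 b1"
      "mu b0 b0 \<in> LS a b0 b1" "mu b0 b1 \<in> LS a b0 b1" "mu b1 b1 \<in> LS a b0 b1"
      using E S4 S2' S3 LS_I[of a b0 b1 1 0 0] lc_e1[of a b0 b1] LS_I[of a b0 b1 0 0 0] lc_0[of a b0 b1]
        LS_I[of a b0 b1 0 0 eta]
      unfolding L_def by (auto simp: LS_I)
    thus ?thesis unfolding LS_span using comm by auto
  qed
  have clos: "\<forall>x\<in>LS a b0 b1. \<forall>y\<in>LS a b0 b1. mu x y \<in> LS a b0 b1"
    unfolding LS_span using span_closed[OF G] by blast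
  have N: "gen_subalg sc mu {a,b} = LS a b0 b1"
  proof
    show "gen_subalg sc mu {a,b} \<subseteq> LS a b0 b1"
    proof (rule gen_lower)
      show "{a,b} \<subseteq> LS a b0 b1" using ha(1) hb LS_I[of a b0 b1 1 0 0] LS_I[of a b0 b1 ph 1 1] unfolding L_def by auto
    qed (use LS_sub clos in auto)
    show "LS a b0 b1 \<subseteq> gen_subalg sc mu {a,b}"
    proof (rule gen_greatest)
      fix Q assume Q: "{a,b} \<subseteq> Q" "subspace Q" "\<forall>x\<in>Q. \<forall>y\<in>Q. mu x y \<in> Q"
      have "mu a b \<in> Q" using Q by auto
      hence "sc (1/eta) (mu a b - sc ph a) \<in> Q" using Q by (auto intro!: subspace_scale subspace_diff)
      moreover have "sc (1/eta) (mu a b - sc ph a) = b1"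
      proof -
        have "mu a b - sc ph a = sc eta b1" unfolding hab by (simp add: L_def lc_def)
        thus ?thesis using eta0 by simp
      qed
      ultimately have q1: "b1 \<in> Q" by simp
      have "b - sc ph a - b1 \<in> Q" using Q q1 by (auto intro!: subspace_scale subspace_diff)
      hence "b0 \<in> Q" using bd by (simp add: algebra_simps)
      hence "{a,b0,b1} \<subseteq> Q" using Q q1 by auto
      thus "LS a b0 b1 \<subseteq> Q" unfolding LS_span using span_minimal Q(2) by blast
    qed
  qed
  show "gen_subalg sc mu {a,b} = LS a b0 b1" by (rule N)
  have nz: "a \<noteq> 0 \<and> b0 \<noteq> 0 \<and> b1 \<noteq> 0"
  proof (rule ccontr)
    assume "\<not> ?thesis"
    hence "dim (LS a b0 b1) \<le> 2" by (intro LS_dim0) auto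
    thus False using dimN N by simp
  qed
  thus "a \<noteq> 0" "b0 \<noteq> 0" "b1 \<noteq> 0" by auto
  note eq = lc_eq[OF E nz[THEN conjunct1] nz[THEN conjunct2, THEN conjunct1] nz[THEN conjunct2, THEN conjunct2]]
  have "mu a (sc eta (mu b0 b1)) = sc eta (sc eta (mu b0 b1))" by (simp add: msc F1)
  hence "L (X - t) 0 (eta*(eta*Z)) = L (eta*(X-t)) 0 (eta*(eta*Z))"
    unfolding S2 L_def mu_a_lc[OF E] lc_sc by simp
  hence "X - t = eta*(X-t)" unfolding L_def using eq by blast
  hence "(1 - eta)*(X - t) = 0" by (simp add: algebra_simps)
  hence tX: "t = X" using eta1 by simp
  have "mu a (mu b0 b0) = 0" using fus00[OF axa b0 b0] by (simp add: eig_iff)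
  hence "L (ph - ph*ph - (X-t)/eta - X) 0 (eta*(1 - ph*eta - Z - Zb)) = L 0 0 0"
    unfolding S4 L_def mu_a_lc[OF E] lc_0 .
  hence "ph - ph*ph - (X-t)/eta - X = 0 \<and> 0 = (0::'f) \<and> eta*(1 - ph*eta - Z - Zb) = 0" unfolding L_def by (rule eq)
  hence c1: "ph - ph*ph - X = 0" and c2: "1 - ph*eta - Z - Zb = 0" using eta0 tX by auto
  have Zb2: "Zb = 1/2" using c2 two unfolding Z_def by (simp add: field_simps)
  have ps'v: "ps' = eta*(1/2 - eta + ph)" using Zb2 eta0 two unfolding Zb_def by (simp add: field_simps)
  show "ps*(1-eta) = eta*(1/2 - eta + ph)" using ps'v ps'_def by simp
  have Yv: "Y = 1/2 - eta + ph" using ps'v eta0 two unfolding Y_def by (simp add: field_simps)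
  have Zv: "Z = 1/2 - ph*eta" using Zb2 Z_def by simp
  have Xv: "X = ph - ph*ph" using c1 by simp
  show "mu b0 b0 = sc (1/2 + eta - ph) b0" unfolding S4 tX Xv Yv Zv Zb2 L_def lc_def using two by (simp add: field_simps)
  show "mu b0 b1 = sc (1/2 - ph*eta) b1" unfolding S2' tX Zv L_def lc_def by simp
  show "mu b1 b1 = sc (ph - ph*ph) a + sc (1/2 - eta + ph) b0" unfolding S3 tX Xv Yv L_def lc_def by simp
  have "(eta*ph + ps'*ph - ph*ph)/eta = ph - ph*ph" using Xv X_def by simp
  hence "eta*ph + ps'*ph - ph*ph = eta*(ph - ph*ph)" using eta0 by (simp add: field_simps)
  thus "ph*(2*eta-1)*(ph - eta/2) = 0" unfolding ps'v using two by (simp add: field_simps)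
qed

end


context axalg begin

lemma in_span2: "x \<in> span {u, v} \<longleftrightarrow> (\<exists>s t. x = sc s u + sc t v)"
proof -
  have "x \<in> span {u, v} \<longleftrightarrow> (\<exists>k. x - sc k u \<in> span {v})" by (rule span_breakdown_eq)
  also have "\<dots> \<longleftrightarrow> (\<exists>s t. x = sc s u + sc t v)"
    unfolding span_singleton
  proof
    assume "\<exists>k. x - sc k u \<in> range (\<lambda>k. sc k v)"
    then obtain k k' where "x - sc k u = sc k' v" by auto
    hence "x = sc k u + sc k' v" by (simp add: diff_eq_eq add.commute)
    thus "\<exists>s t. x = sc s u + sc t v" by blast
  next
    assume "\<exists>s t. x = sc s u + sc t v"
    then obtain s t where "x = sc s u + sc t v" by blast
    hence "x - sc s u = sc t v" by simp
    thus "\<exists>k. x - sc k u \<in> range (\<lambda>k. sc k v)" by (metis rangeI)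
  qed
  finally show ?thesis .
qed

lemma gen_span2:
  assumes "mu b b \<in> span {b, c}" "mu b c \<in> span {b, c}" "mu c c \<in> span {b, c}"
  shows "gen_subalg sc mu {b, c} = span {b, c}"
proof
  have G: "\<forall>g\<in>{b,c}. \<forall>h\<in>{b,c}. mu g h \<in> span {b,c}" using assms comm by auto
  show "gen_subalg sc mu {b, c} \<subseteq> span {b, c}"
    by (rule gen_lower) (auto intro: span_base span_closed[OF G])
  show "span {b, c} \<subseteq> gen_subalg sc mu {b, c}"
  proof (rule gen_greatest)
    fix X assume "{b, c} \<subseteq> X" "subspace X"
    thus "span {b, c} \<subseteq> X" by (rule span_minimal)
  qed
qed

lemma dim2:
  assumes "c \<noteq> 0" "b \<notin> span {c}"
  shows "dim (span {b, c}) = 2"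
proof -
  have bc: "b \<noteq> c" using assms span_base[of c "{c}"] by auto
  have "independent {b, c}" using assms bc by (simp add: independent_insert)
  hence "dim (span {b, c}) = card {b, c}" by (rule dim_span_eq_card_independent)
  thus ?thesis using bc by simp
qed

lemma LS_closed:
  assumes E: "mu a a = a" "mu a b0 = 0" "mu a b1 = sc eta b1"
    and T: "mu b0 b0 = sc P b0" "mu b0 b1 = sc Cc b1" "mu b1 b1 = sc A a + sc B b0"
  shows "\<forall>x\<in>LS a b0 b1. \<forall>y\<in>LS a b0 b1. mu x y \<in> LS a b0 b1"
proof (intro ballI)
  fix x y assume "x \<in> LS a b0 b1" "y \<in> LS a b0 b1"
  then obtain x1 x2 x3 y1 y2 y3 where "x = lc a b0 b1 x1 x2 x3" "y = lc a b0 b1 y1 y2 y3"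
    unfolding LS_def by blast
  thus "mu x y \<in> LS a b0 b1" by (simp add: lc_mult[OF E T] LS_I)
qed

lemma caseD:
  assumes E: "mu a a = a" "mu a b0 = 0" "mu a b1 = sc eta b1"
    and T: "mu b0 b0 = sc P b0" "mu b0 b1 = sc Cc b1" "mu b1 b1 = sc A a + sc B b0"
    and hC: "eta*ph + Cc = 1/2"
    and D: "ph*B - A \<noteq> 0"
    and N: "gen_subalg sc mu {a,b} = LS a b0 b1"
    and hb: "b = lc a b0 b1 ph 1 1" and hc: "c = lc a b0 b1 ph 1 (-1)"
  shows "gen_subalg sc mu {b, c} = gen_subalg sc mu {a, b}"
proof
  note clos = LS_closed[OF E T]
  show "gen_subalg sc mu {b, c} \<subseteq> gen_subalg sc mu {a, b}"
    unfolding N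
  proof (rule gen_lower)
    show "{b, c} \<subseteq> LS a b0 b1" using hb hc by auto
  qed (use LS_sub clos in auto)
  show "gen_subalg sc mu {a, b} \<subseteq> gen_subalg sc mu {b, c}"
  proof (rule gen_greatest)
    fix Q assume Q: "{b, c} \<subseteq> Q" "subspace Q" "\<forall>x\<in>Q. \<forall>y\<in>Q. mu x y \<in> Q"
    have "sc (1/2) (b - c) = lc a b0 b1 0 0 1"
      unfolding hb hc lc_diff lc_sc using two by simp
    moreover have "sc (1/2) (b - c) \<in> Q" using Q by (auto intro!: subspace_scale subspace_diff)
    ultimately have q1: "lc a b0 b1 0 0 1 \<in> Q" by simp
    have "mu b (lc a b0 b1 0 0 1) \<in> Q" using Q q1 by auto
    moreover have "mu b (lc a b0 b1 0 0 1) = lc a b0 b1 A B (eta*ph + Cc)"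
      unfolding hb lc_mult[OF E T] by simp
    ultimately have q2: "lc a b0 b1 A B (1/2) \<in> Q" using hC by simp
    define D' where "D' = ph*B - A"
    have D'nz: "D' \<noteq> 0" using D D'_def by simp
    have "sc (B/D') b + sc ((1/2-B)/D') (lc a b0 b1 0 0 1) + sc (-1/D') (lc a b0 b1 A B (1/2)) \<in> Q"
      using Q q1 q2 by (auto intro!: subspace_scale subspace_add subspace_diff)
    moreover have "sc (B/D') b + sc ((1/2-B)/D') (lc a b0 b1 0 0 1) + sc (-1/D') (lc a b0 b1 A B (1/2)) = a"
    proof -
      have "sc (B/D') b + sc ((1/2-B)/D') (lc a b0 b1 0 0 1) + sc (-1/D') (lc a b0 b1 A B (1/2))
        = lc a b0 b1 ((B*ph - A)/D') 0 0"
        unfolding hb lc_sc lc_add using D'nz by (intro lc_cong) (simp_all add: field_simps)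
      also have "\<dots> = lc a b0 b1 1 0 0" using D'nz by (simp add: D'_def mult.commute)
      finally show ?thesis using lc_e1 by metis
    qed
    ultimately have "a \<in> Q" by simp
    thus "gen_subalg sc mu {a, b} \<subseteq> Q" using Q by (intro gen_lower) auto
  qed
qed

end


context axalg begin

lemma sc_u: "sc t u = lc u v w t 0 0" and sc_v: "sc t v = lc u v w 0 t 0" and sc_w: "sc t w = lc u v w 0 0 t"
  by (simp_all add: lc_def)

lemma four: "(4::'f) \<noteq> 0"
proof -
  have "(4::'f) = 2*2" by simp
  thus ?thesis using two by (metis no_zero_divisors)
qed

lemma eight: "(8::'f) \<noteq> 0"
proof -
  have "(8::'f) = 2*4" by simp
  thus ?thesis using two four by (metis no_zero_divisors)
qed

lemma bool_neqI: "\<not> P \<Longrightarrow> Q \<Longrightarrow> P \<noteq> Q" by auto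

lemma caseI:
  assumes E: "mu a a = a" "mu a b0 = 0" "mu a b1 = sc eta b1"
    and nz: "a \<noteq> 0" "b0 \<noteq> 0" "b1 \<noteq> 0" and et: "eta = 1/2"
    and T: "mu b0 b0 = sc 1 b0" "mu b0 b1 = sc (1/2) b1" "mu b1 b1 = sc 0 a + sc 0 b0"
    and N: "gen_subalg sc mu {a,b} = LS a b0 b1"
    and hb: "b = lc a b0 b1 0 1 1" and hc: "c = lc a b0 b1 0 1 (-1)"
  shows "\<exists>e. is_identity_of mu (gen_subalg sc mu {a,b}) e \<and>
         ((mu a b = sc (-1/2) e + sc (1/2) a + sc (1/2) b
           \<and> mu b c = sc (1/2) b + sc (1/2) c
           \<and> dim (gen_subalg sc mu {b, c}) = 2
           \<and> span {b, c} \<inter> span {e, a} = range (\<lambda>t. sc t (e - a)))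
          \<noteq>
          (mu a b = sc (-1/4) e + sc (1/2) a + sc (1/2) b
           \<and> mu b c = 0
           \<and> dim (gen_subalg sc mu {b, c}) = 2
           \<and> span {b, c} \<inter> span {e, a} = range (\<lambda>t. sc t e)))"
proof -
  note mult = lc_mult[OF E T]
  note eq = lc_eq[OF E nz]
  define L where "L = lc a b0 b1"
  define e where "e = L 1 1 0"
  have ha: "sc t a = L t 0 0" for t unfolding L_def by (rule sc_u)
  have ident: "is_identity_of mu (gen_subalg sc mu {a,b}) e"
    unfolding is_identity_of_def N
  proof
    show "e \<in> LS a b0 b1" unfolding e_def L_def by (rule LS_I)
    show "\<forall>n\<in>LS a b0 b1. mu e n = n"
    proof
      fix n assume "n \<in> LS a b0 b1"
      then obtain x y z where n: "n = L x y z" unfolding LS_def L_def by blast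
      show "mu e n = n" unfolding n e_def L_def mult using two by (simp add: et field_simps)
    qed
  qed
  have ab: "mu a b = L 0 0 (1/2)" unfolding hb L_def mu_a_lc[OF E] by (simp add: et)
  have p1: "mu a b = sc (-1/2) e + sc (1/2) a + sc (1/2) b"
    unfolding ab unfolding ha e_def hb L_def lc_sc lc_add using two by (intro lc_cong) (simp_all add: field_simps)
  have np2: "mu a b \<noteq> sc (-1/4) e + sc (1/2) a + sc (1/2) b"
  proof
    assume "mu a b = sc (-1/4) e + sc (1/2) a + sc (1/2) b"
    hence "L 0 0 (1/2) = L (-1/4 + 1/2) (-1/4 + 1/2) (1/2)"
      unfolding ab unfolding ha e_def hb L_def lc_sc lc_add by simp
    hence "(0::'f) = -1/4 + 1/2" unfolding L_def using eq by blast
    also have "\<dots> = 1/4" using two four eight by (simp add: field_simps)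
    finally show False using four by simp
  qed
  have bc: "mu b c = L 0 1 0" unfolding hb hc L_def mult using two by (simp add: et field_simps)
  have p2: "mu b c = sc (1/2) b + sc (1/2) c"
    unfolding bc unfolding hb hc L_def lc_sc lc_add using two by (intro lc_cong) (simp_all add: field_simps)
  have bb: "mu b b = b" unfolding hb mult using two by (simp add: et field_simps)
  have cc: "mu c c = c" unfolding hc mult using two by (simp add: et field_simps)
  have V: "gen_subalg sc mu {b, c} = span {b, c}"
  proof (rule gen_span2)
    show "mu b b \<in> span {b, c}" unfolding bb by (rule span_base) simp
    show "mu c c \<in> span {b, c}" unfolding cc by (rule span_base) simp
    show "mu b c \<in> span {b, c}" unfolding p2 in_span2 by blast
  qed
  have cnz: "c \<noteq> 0"
  proof
    assume "c = 0"
    hence "L 0 1 (-1) = L 0 0 0" unfolding hc L_def lc_0 .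
    from eq[OF this[unfolded L_def]] show False by simp
  qed
  have bnc: "b \<notin> span {c}"
  proof
    assume "b \<in> span {c}"
    then obtain k where "b = sc k c" unfolding span_singleton by auto
    hence "L 0 1 1 = L 0 k (-k)" unfolding hb hc L_def lc_sc by simp
    hence "1 = k" "1 = -k" unfolding L_def using eq by blast+
    hence "(2::'f) = 0" by (simp add: algebra_simps)
    thus False using two by simp
  qed
  have p3: "dim (gen_subalg sc mu {b, c}) = 2" unfolding V by (rule dim2[OF cnz bnc])
  have ea: "e - a = L 0 1 0" unfolding e_def L_def using lc_e1[of a b0 b1] lc_diff[of a b0 b1 1 1 0 1 0 0]
    by simp
  have p4: "span {b, c} \<inter> span {e, a} = range (\<lambda>t. sc t (e - a))"
  proof
    show "span {b, c} \<inter> span {e, a} \<subseteq> range (\<lambda>t. sc t (e - a))"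
    proof
      fix x assume "x \<in> span {b, c} \<inter> span {e, a}"
      hence "\<exists>s t. x = sc s b + sc t c" "\<exists>u v. x = sc u e + sc v a" by (simp_all add: in_span2)
      then obtain s t u v where x1: "x = sc s b + sc t c" and x2: "x = sc u e + sc v a"
        by blast
      have "L 0 (s+t) (s-t) = L (u+v) u 0"
      proof -
        have "L 0 (s+t) (s-t) = sc s b + sc t c" unfolding hb hc L_def lc_sc lc_add by simp
        also have "\<dots> = sc u e + sc v a" using x1 x2 by simp
        also have "\<dots> = L (u+v) u 0" unfolding e_def ha L_def lc_sc lc_add by simp
        finally show ?thesis .
      qed
      hence "0 = u + v" "s + t = u" "s - t = 0" unfolding L_def using eq by blast+
      hence "x = sc u (e - a)" unfolding x2 unfolding ea unfolding ha e_def L_def lc_sc lc_add by simp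
      thus "x \<in> range (\<lambda>t. sc t (e - a))" using rangeI[of "\<lambda>t. sc t (e - a)" u] by simp
    qed
    show "range (\<lambda>t. sc t (e - a)) \<subseteq> span {b, c} \<inter> span {e, a}"
    proof
      fix x assume "x \<in> range (\<lambda>t. sc t (e - a))"
      then obtain k where x: "x = sc k (e - a)" by auto
      have xb: "x = sc (k/2) b + sc (k/2) c"
        unfolding x ea hb hc L_def lc_sc lc_add using two by (intro lc_cong) (simp_all add: field_simps)
      have xe: "x = sc k e + sc (-k) a" unfolding x by (simp add: algebra_simps)
      have "x \<in> span {b, c}" unfolding in_span2 using xb by blast
      moreover have "x \<in> span {e, a}" unfolding in_span2 using xe by blast
      ultimately show "x \<in> span {b, c} \<inter> span {e, a}" by simp
    qed
  qed
  show ?thesis using ident p1 p2 p3 p4 np2 by blast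
qed


end


context axalg begin

lemma caseII:
  assumes E: "mu a a = a" "mu a b0 = 0" "mu a b1 = sc eta b1"
    and nz: "a \<noteq> 0" "b0 \<noteq> 0" "b1 \<noteq> 0" and et: "eta = 1/2"
    and T: "mu b0 b0 = sc (1/2) b0" "mu b0 b1 = sc (1/4) b1" "mu b1 b1 = sc (1/4) a + sc (1/2) b0"
    and N: "gen_subalg sc mu {a,b} = LS a b0 b1"
    and hb: "b = lc a b0 b1 (1/2) 1 1" and hc: "c = lc a b0 b1 (1/2) 1 (-1)"
  shows "\<exists>e. is_identity_of mu (gen_subalg sc mu {a,b}) e \<and>
         ((mu a b = sc (-1/2) e + sc (1/2) a + sc (1/2) b
           \<and> mu b c = sc (1/2) b + sc (1/2) c
           \<and> dim (gen_subalg sc mu {b, c}) = 2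
           \<and> span {b, c} \<inter> span {e, a} = range (\<lambda>t. sc t (e - a)))
          \<noteq>
          (mu a b = sc (-1/4) e + sc (1/2) a + sc (1/2) b
           \<and> mu b c = 0
           \<and> dim (gen_subalg sc mu {b, c}) = 2
           \<and> span {b, c} \<inter> span {e, a} = range (\<lambda>t. sc t e)))"
proof -
  note mult = lc_mult[OF E T]
  note eq = lc_eq[OF E nz]
  define L where "L = lc a b0 b1"
  define e where "e = L 1 2 0"
  have ha: "sc t a = L t 0 0" for t unfolding L_def by (rule sc_u)
  have ident: "is_identity_of mu (gen_subalg sc mu {a,b}) e"
    unfolding is_identity_of_def N
  proof
    show "e \<in> LS a b0 b1" unfolding e_def L_def by (rule LS_I)
    show "\<forall>n\<in>LS a b0 b1. mu e n = n"
    proof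
      fix n assume "n \<in> LS a b0 b1"
      then obtain x y z where n: "n = L x y z" unfolding LS_def L_def by blast
      show "mu e n = n" unfolding n e_def L_def mult using two four eight by (intro lc_cong) (simp_all add: et field_simps)
    qed
  qed
  have ab: "mu a b = L (1/2) 0 (1/2)" unfolding hb L_def mu_a_lc[OF E] by (simp add: et)
  have p1: "mu a b = sc (-1/4) e + sc (1/2) a + sc (1/2) b"
    unfolding ab unfolding ha e_def hb L_def lc_sc lc_add using two four eight by (intro lc_cong) (simp_all add: field_simps)
  have np2: "mu a b \<noteq> sc (-1/2) e + sc (1/2) a + sc (1/2) b"
  proof
    assume "mu a b = sc (-1/2) e + sc (1/2) a + sc (1/2) b"
    hence "L (1/2) 0 (1/2) = L (-1/2 + 1/2 + 1/4) (-1/2*2 + 1/2) (1/2)"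
      unfolding ab unfolding ha e_def hb L_def lc_sc lc_add by simp
    hence "(0::'f) = -1/2*2 + 1/2" unfolding L_def using eq by blast
    also have "\<dots> = -1/2" using two by (simp add: field_simps)
    finally show False using two by simp
  qed
  have "mu b c = lc a b0 b1 0 0 0" unfolding hb hc L_def mult using two four eight
    by (intro lc_cong) (simp_all add: et field_simps)
  hence bc: "mu b c = 0" by (simp add: lc_0)
  have p2: "mu b c = 0" by (rule bc)
  have bb: "mu b b = b" unfolding hb mult using two four eight by (intro lc_cong) (simp_all add: et field_simps)
  have cc: "mu c c = c" unfolding hc mult using two four eight by (intro lc_cong) (simp_all add: et field_simps)
  have V: "gen_subalg sc mu {b, c} = span {b, c}"
  proof (rule gen_span2)
    show "mu b b \<in> span {b, c}" unfolding bb by (rule span_base) simp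
    show "mu c c \<in> span {b, c}" unfolding cc by (rule span_base) simp
    show "mu b c \<in> span {b, c}" unfolding p2 by (rule span_zero)
  qed
  have cnz: "c \<noteq> 0"
  proof
    assume "c = 0"
    hence "L (1/2) 1 (-1) = L 0 0 0" unfolding hc L_def lc_0 .
    from eq[OF this[unfolded L_def]] show False by simp
  qed
  have bnc: "b \<notin> span {c}"
  proof
    assume "b \<in> span {c}"
    then obtain k where "b = sc k c" unfolding span_singleton by auto
    hence "L (1/2) 1 1 = L (k*(1/2)) k (-k)" unfolding hb hc L_def lc_sc by simp
    hence "1 = k" "1 = -k" unfolding L_def using eq by (blast, blast)
    hence "(2::'f) = 0" by (simp add: algebra_simps)
    thus False using two by simp
  qed
  have p3: "dim (gen_subalg sc mu {b, c}) = 2" unfolding V by (rule dim2[OF cnz bnc])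
  have p4: "span {b, c} \<inter> span {e, a} = range (\<lambda>t. sc t e)"
  proof
    show "span {b, c} \<inter> span {e, a} \<subseteq> range (\<lambda>t. sc t e)"
    proof
      fix x assume "x \<in> span {b, c} \<inter> span {e, a}"
      hence "\<exists>s t. x = sc s b + sc t c" "\<exists>u v. x = sc u e + sc v a" by (simp_all add: in_span2)
      then obtain s t u v where x1: "x = sc s b + sc t c" and x2: "x = sc u e + sc v a"
        by blast
      have "L (s/2 + t/2) (s+t) (s-t) = L (u+v) (2*u) 0"
      proof -
        have "L (s/2 + t/2) (s+t) (s-t) = sc s b + sc t c" unfolding hb hc L_def lc_sc lc_add by simp
        also have "\<dots> = sc u e + sc v a" using x1 x2 by simp
        also have "\<dots> = L (u+v) (2*u) 0" unfolding e_def ha L_def lc_sc lc_add by (simp add: mult.commute)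
        finally show ?thesis .
      qed
      hence h: "s/2 + t/2 = u + v" "s + t = 2*u" "s - t = 0" unfolding L_def using eq by (blast, blast, blast)
      hence "s = t" by simp
      hence "2*s = 2*u" using h by simp
      hence "s = u" using two by simp
      hence "v = 0" using h \<open>s = t\<close> two by (simp add: field_simps)
      hence "x = sc u e" unfolding x2 by simp
      thus "x \<in> range (\<lambda>t. sc t e)" using rangeI[of "\<lambda>t. sc t e" u] by simp
    qed
    show "range (\<lambda>t. sc t e) \<subseteq> span {b, c} \<inter> span {e, a}"
    proof
      fix x assume "x \<in> range (\<lambda>t. sc t e)"
      then obtain k where x: "x = sc k e" by auto
      have xb: "x = sc k b + sc k c"
        unfolding x e_def hb hc L_def lc_sc lc_add using two by (intro lc_cong) (simp_all add: field_simps)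
      have xe: "x = sc k e + sc 0 a" unfolding x by simp
      have "x \<in> span {b, c}" unfolding in_span2 using xb by blast
      moreover have "x \<in> span {e, a}" unfolding in_span2 using xe by blast
      ultimately show "x \<in> span {b, c} \<inter> span {e, a}" by simp
    qed
  qed
  have X: "\<not> (mu a b = sc (-1/2) e + sc (1/2) a + sc (1/2) b
           \<and> mu b c = sc (1/2) b + sc (1/2) c
           \<and> dim (gen_subalg sc mu {b, c}) = 2
           \<and> span {b, c} \<inter> span {e, a} = range (\<lambda>t. sc t (e - a)))" using np2 by simp
  have Y: "mu a b = sc (-1/4) e + sc (1/2) a + sc (1/2) b
           \<and> mu b c = 0
           \<and> dim (gen_subalg sc mu {b, c}) = 2
           \<and> span {b, c} \<inter> span {e, a} = range (\<lambda>t. sc t e)" using p1 p2 p3 p4 by (intro conjI)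
  show ?thesis
    by (rule exI[of _ e], rule conjI[OF ident], rule bool_neqI[OF X Y])
qed

end



lemma scal:
  fixes eta ph ps :: "'f::field"
  assumes two: "(2::'f) \<noteq> 0" and e0: "eta \<noteq> 0" and e1: "eta \<noteq> 1"
    and h1: "ps*(1-eta) = eta*(1/2 - eta + ph)" and h2: "ph*(1-eta) = eta*(1/2 - eta + ps)"
    and h3: "ph*(2*eta-1)*(ph - eta/2) = 0"
    and D: "ph*(1/2 - eta + ph) - (ph - ph*ph) = 0"
  shows "eta = 1/2 \<and> (ph = 0 \<or> ph = 1/2)"
proof (cases "ph = 0")
  case True
  hence "eta*(1/2 - eta + ps) = 0" using h2 by simp
  hence z: "1/2 - eta + ps = 0" using e0 by simp
  have "ps = (1/2 - eta + ps) + eta - 1/2" by (simp add: algebra_simps)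
  hence "ps = eta - 1/2" using z by simp
  hence q: "(eta - 1/2)*(1-eta) = eta*(1/2 - eta)" using h1 True by simp
  have "(eta - 1/2)*(1-eta) + (eta - 1/2)*eta = (eta - 1/2)*((1-eta)+eta)" by (simp only: distrib_left)
  hence "eta - 1/2 = (eta - 1/2)*(1-eta) + (eta - 1/2)*eta" by simp
  also have "\<dots> = eta*(1/2 - eta) + (eta-1/2)*eta" using q by simp
  also have "\<dots> = eta*((1/2 - eta) + (eta-1/2))" by (simp only: distrib_left mult.commute)
  also have "\<dots> = 0" by simp
  finally have "eta - 1/2 = 0" .
  hence "eta = 1/2" by (simp only: right_minus_eq)
  thus ?thesis using True by simp
next
  case False
  have "ph*(2*ph - eta - 1/2) = 0" using D two by (simp add: field_simps)
  hence "2*ph - eta - 1/2 = 0" using False by simp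
  hence p: "2*ph = eta + 1/2" by (simp add: algebra_simps)
  have "(2*eta-1)*(ph - eta/2) = 0" using h3 False by simp
  moreover have "ph - eta/2 \<noteq> 0"
  proof
    assume "ph - eta/2 = 0"
    hence "2*ph = eta" using two by (simp add: field_simps)
    hence "(1/2::'f) = 0" using p by simp
    thus False using two by simp
  qed
  ultimately have "2*eta - 1 = 0" by simp
  hence et: "eta = 1/2" using two by (simp add: field_simps)
  hence "2*ph = 1" using p two by (simp add: field_simps)
  hence "ph = 1/2" using two by (simp add: field_simps)
  thus ?thesis using et by simp
qed

theorem lemma3p11:
  fixes sc :: "'f::field \<Rightarrow> 'v::ab_group_add \<Rightarrow> 'v"
    and mu :: "'v \<Rightarrow> 'v \<Rightarrow> 'v"
    and eta :: 'f and a b :: 'v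
  assumes vs: "vector_space sc"
    and bilin: "\<And>x. Vector_Spaces.linear sc sc (mu x)"
    and comm: "\<And>x y. mu x y = mu y x"
    and char: "(2::'f) \<noteq> 0"
    and eta: "eta \<noteq> 0" "eta \<noteq> 1"
    and prim: "primitive_axial_jordan sc mu eta"
    and ax_a: "is_axis sc mu eta a" and ax_b: "is_axis sc mu eta b"
    and ab: "a \<noteq> b"
    and dimN: "vector_space.dim sc (gen_subalg sc mu {a, b}) = 3"
  shows "gen_subalg sc mu {b, miyamoto sc mu eta a b} = gen_subalg sc mu {a, b}
    \<or> (eta = 1/2 \<and>
       (\<exists>e. is_identity_of mu (gen_subalg sc mu {a, b}) e \<and>
         ((mu a b = sc (-1/2) e + sc (1/2) a + sc (1/2) b
           \<and> mu b (miyamoto sc mu eta a b) = sc (1/2) b + sc (1/2) (miyamoto sc mu eta a b)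
           \<and> vector_space.dim sc (gen_subalg sc mu {b, miyamoto sc mu eta a b}) = 2
           \<and> module.span sc {b, miyamoto sc mu eta a b} \<inter> module.span sc {e, a}
               = range (\<lambda>t. sc t (e - a)))
          \<noteq>
          (mu a b = sc (-1/4) e + sc (1/2) a + sc (1/2) b
           \<and> mu b (miyamoto sc mu eta a b) = 0
           \<and> vector_space.dim sc (gen_subalg sc mu {b, miyamoto sc mu eta a b}) = 2
           \<and> module.span sc {b, miyamoto sc mu eta a b} \<inter> module.span sc {e, a}
               = range (\<lambda>t. sc t e)))))"
proof -
  have lin1: "mu x (y + z) = mu x y + mu x z" for x y z using bilin[of x] by (simp add: Vector_Spaces.linear_iff)
  have lin2: "mu x (sc c y) = sc c (mu x y)" for x c y using bilin[of x] by (simp add: Vector_Spaces.linear_iff)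
  note lin = lin1 lin2
  interpret axalg sc mu eta
    using vs lin comm char eta by (simp add: axalg_def axalg_axioms_def)
  obtain ph b0 b1 where bd: "b = sc ph a + b0 + b1" "b0 \<in> eigsp sc mu a 0" "b1 \<in> eigsp sc mu a eta"
    using axis_dec[OF ax_a, of b] by metis
  obtain ps a0 a1 where ad: "a = sc ps b + a0 + a1" "a0 \<in> eigsp sc mu b 0" "a1 \<in> eigsp sc mu b eta"
    using axis_dec[OF ax_b, of a] by metis
  have dimN': "dim (gen_subalg sc mu {b, a}) = 3" using dimN by (simp add: insert_commute)
  note C1 = core[OF ax_a ax_b dimN bd ad]
  note C2 = core[OF ax_b ax_a dimN' ad bd]
  have E: "mu a a = a" "mu a b0 = 0" "mu a b1 = sc eta b1"
    using axis_idem[OF ax_a] bd by (auto simp: eig_iff)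
  have mi: "miyamoto sc mu eta a b = lc a b0 b1 ph 1 (-1)"
    using miy[OF ax_a bd] by (simp add: lc_def)
  have hb: "b = lc a b0 b1 ph 1 1" using bd by (simp add: lc_def)
  show ?thesis
  proof (cases "ph*(1/2 - eta + ph) - (ph - ph*ph) = 0")
    case False
    have hC: "eta*ph + (1/2 - ph*eta) = 1/2" by (simp add: mult.commute)
    have "gen_subalg sc mu {b, miyamoto sc mu eta a b} = gen_subalg sc mu {a, b}"
      by (rule caseD[OF E C1(5-7) hC False C1(1) hb mi])
    thus ?thesis by simp
  next
    case True
    from scal[OF char eta C1(8) C2(8) C1(9) True]
    have et: "eta = 1/2" and ph: "ph = 0 \<or> ph = 1/2" by auto
    from ph show ?thesis
    proof
      assume p0: "ph = 0"
      have T: "mu b0 b0 = sc 1 b0" "mu b0 b1 = sc (1/2) b1" "mu b1 b1 = sc 0 a + sc 0 b0"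
        using C1(5-7) unfolding p0 et using char by (simp_all add: field_simps)
      have hb': "b = lc a b0 b1 0 1 1" using hb p0 by simp
      have mi': "miyamoto sc mu eta a b = lc a b0 b1 0 1 (-1)" using mi p0 by simp
      show ?thesis using caseI[OF E C1(2-4) et T C1(1) hb' mi'] et by blast
    next
      assume p0: "ph = 1/2"
      have T: "mu b0 b0 = sc (1/2) b0" "mu b0 b1 = sc (1/4) b1" "mu b1 b1 = sc (1/4) a + sc (1/2) b0"
        using C1(5-7) unfolding p0 et using char four by (simp_all add: field_simps)
      have hb': "b = lc a b0 b1 (1/2) 1 1" using hb p0 by simp
      have mi': "miyamoto sc mu eta a b = lc a b0 b1 (1/2) 1 (-1)" using mi p0 by simp
      show ?thesis using caseII[OF E C1(2-4) et T C1(1) hb' mi'] et by blast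
    qed
  qed
qed

end
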